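(* For every $n\ge 2$, the minimum size of a string attractor of the prefix $\mathbf{pd}[0..n-1]$ of the period-doubling sequence is $2$.
   Context: The period-doubling sequence $\mathbf{pd}=\mathtt{101110101011}\cdots$ is the infinite fixed point, starting with $1$, of the morphism $1\mapsto 10$, $0\mapsto 11$; it is indexed starting at $0$, and $\mathbf{pd}[0..n-1]$ is its length-$n$ prefix. A string attractor of a finite word $w=w[0..n-1]$ is a set $S\subseteq\{0,\ldots,n-1\}$ such that every nonempty factor $f$ of $w$ has an occurrence $w[p..q]=f$ with $p\le i\le q$ for some $i\in S$. *)

theory Defs
  imports Main
begin

fun pd_img :: "nat \<Rightarrow> nat list" where
  "pd_img a = (if a = 1 then [1, 0] else [1, 1])"

definition pd_morph :: "nat list \<Rightarrow> nat list" where
  "pd_morph w = concat (map pd_img w)"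

text \<open>The infinite fixed point starting with 1: its letter at index i is the i-th letter of
  pd_morph^(i+1) [1], which has length 2^(i+1) > i and is a prefix of the fixed point.\<close>
definition pd :: "nat \<Rightarrow> nat" where
  "pd i = ((pd_morph ^^ (Suc i)) [1]) ! i"

definition pd_prefix :: "nat \<Rightarrow> nat list" where
  "pd_prefix n = map pd [0..<n]"

definition factor_at :: "'a list \<Rightarrow> nat \<Rightarrow> nat \<Rightarrow> 'a list" where
  "factor_at w p q = take (Suc q - p) (drop p w)"

definition string_attractor :: "'a list \<Rightarrow> nat set \<Rightarrow> bool" where
  "string_attractor w S \<longleftrightarrow> S \<subseteq> {0..<length w} \<and>
     (\<forall>p q. p \<le> q \<and> q < length w \<longrightarrow>
        (\<exists>p' q' i. p' \<le> q' \<and> q' < length w \<and> factor_at w p' q' = factor_at w p q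
                 \<and> i \<in> S \<and> p' \<le> i \<and> i \<le> q'))"

definition min_attractor_size :: "'a list \<Rightarrow> nat" where
  "min_attractor_size w = (LEAST k. \<exists>S. string_attractor w S \<and> card S = k)"

end

theory Submission
  imports Defs
begin

function g :: "nat \<Rightarrow> nat" where
  "g i = (if even i then 1 else 1 - g (i div 2))"
  by auto
termination
  by (relation "measure id") (auto elim: oddE)

declare g.simps [simp del]

lemma g_even: "even i \<Longrightarrow> g i = 1"
  by (subst g.simps) simp

lemma g_odd: "g (Suc (2 * j)) = 1 - g j"
  by (subst g.simps) simp

lemma g_le1: "g i \<le> 1"
proof -
  have "g i = (if even i then 1 else 1 - g (i div 2))" by (rule g.simps)
  then show ?thesis by (cases "even i") auto
qed

lemma len_concat_pd: "length (concat (map pd_img xs)) = 2 * length xs"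
  by (induction xs) auto

lemma nth_concat_pd:
  "i < 2 * length xs \<Longrightarrow> concat (map pd_img xs) ! i = pd_img (xs ! (i div 2)) ! (i mod 2)"
proof (induction xs arbitrary: i)
  case Nil then show ?case by simp
next
  case (Cons x xs)
  show ?case
  proof (cases "i < 2")
    case True
    then have "i = 0 \<or> i = 1" by auto
    then show ?thesis by (auto simp: nth_append)
  next
    case False
    have l: "length (pd_img x) = 2" by simp
    have "concat (map pd_img (x # xs)) ! i = concat (map pd_img xs) ! (i - 2)"
      using False by (simp add: nth_append numeral_2_eq_2)
    also have "\<dots> = pd_img (xs ! ((i - 2) div 2)) ! ((i - 2) mod 2)"
      using Cons.prems False by (intro Cons.IH) simp
    also have "(i - 2) div 2 = i div 2 - 1" using False by presburger
    also have "(i - 2) mod 2 = i mod 2" using False by (metis le_add_diff_inverse2 linorder_not_le mod_add_self2)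
    also have "xs ! (i div 2 - 1) = (x # xs) ! (i div 2)"
    proof -
      have "i div 2 = Suc (i div 2 - 1)" using False by presburger
      then show ?thesis by (metis nth_Cons_Suc)
    qed
    finally show ?thesis .
  qed
qed

lemma P_props:
  "length ((pd_morph ^^ m) [1]) = 2^m \<and> (\<forall>i < 2^m. (pd_morph ^^ m) [1] ! i = g i)"
proof (induction m)
  case 0 then show ?case by (simp add: g_even)
next
  case (Suc m)
  let ?xs = "(pd_morph ^^ m) [1]"
  have L: "length ?xs = 2^m" using Suc.IH by blast
  have len: "length (pd_morph ?xs) = 2^Suc m"
    unfolding pd_morph_def[of ?xs] len_concat_pd L by simp
  have "\<forall>i<2^Suc m. pd_morph ?xs ! i = g i"
  proof (intro allI impI)
    fix i :: nat assume i: "i < 2^Suc m"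
    have "pd_morph ?xs ! i = pd_img (?xs ! (i div 2)) ! (i mod 2)"
      unfolding pd_morph_def[of ?xs] using nth_concat_pd[of i ?xs] L i by simp
    also have "?xs ! (i div 2) = g (i div 2)" using Suc.IH i by auto
    finally have e: "pd_morph ?xs ! i = pd_img (g (i div 2)) ! (i mod 2)" .
    show "pd_morph ?xs ! i = g i"
    proof (cases "even i")
      case True
      then show ?thesis using e by (simp add: g_even)
    next
      case False
      then have "i = Suc (2 * (i div 2))" by presburger
      then have "g i = 1 - g (i div 2)" by (metis g_odd)
      moreover have "g (i div 2) \<le> 1" by (rule g_le1)
      ultimately show ?thesis using e False by (auto simp: odd_iff_mod_2_eq_one)
    qed
  qed
  with len show ?case by simp
qed

lemma pd_g: "pd i = g i"
proof -
  have "i < 2 ^ i" by (rule less_exp)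
  moreover have "(2::nat) ^ i \<le> 2 ^ Suc i" by simp
  ultimately have "i < 2 ^ Suc i" by linarith
  then show ?thesis using P_props[of "Suc i"] by (simp add: pd_def)
qed

lemma pd_even: "even i \<Longrightarrow> pd i = 1"
  by (simp add: pd_g g_even)

lemma pd_odd: "pd (Suc (2 * j)) = 1 - pd j"
  by (simp add: pd_g g_odd)

lemma pd_le1: "pd i \<le> 1"
  using g_le1[of i] by (simp add: pd_g)

lemma pd_shift: "\<not> 2^m dvd Suc i \<Longrightarrow> pd (i + 2^m * s) = pd i"
proof (induction m arbitrary: i)
  case 0 then show ?case by simp
next
  case (Suc m)
  show ?case
  proof (cases "even i")
    case True
    then show ?thesis by (simp add: pd_even)
  next
    case False
    then obtain j where j: "i = Suc (2 * j)" by (metis oddE Suc_eq_plus1)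
    have si: "Suc i = 2 * Suc j" using j by simp
    have "\<not> 2^m dvd Suc j"
    proof
      assume "2^m dvd Suc j"
      then have "2 * 2^m dvd 2 * Suc j" by (rule mult_dvd_mono[OF dvd_refl])
      then show False using Suc.prems si by simp
    qed
    then have "pd (j + 2^m * s) = pd j" by (rule Suc.IH)
    have "pd (i + 2^Suc m * s) = pd (Suc (2 * (j + 2^m * s)))"
      by (rule arg_cong[where f=pd]) (simp add: j algebra_simps)
    also have "\<dots> = 1 - pd (j + 2^m * s)" by (rule pd_odd)
    also have "\<dots> = 1 - pd j" using \<open>pd (j + 2^m * s) = pd j\<close> by simp
    also have "\<dots> = pd i" using j pd_odd by simp
    finally show ?thesis .
  qed
qed

lemma pd_pow: "odd u \<Longrightarrow> pd (2^m * u - 1) = (if even m then 1 else 0)"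
proof (induction m)
  case 0
  then show ?case by (simp add: pd_even)
next
  case (Suc m)
  define X where "X = 2^m * u"
  have "X \<ge> 1" using Suc.prems by (simp add: X_def Suc_le_eq odd_pos)
  moreover have "2^Suc m * u = 2 * X" by (simp add: X_def)
  ultimately have "2^Suc m * u - 1 = Suc (2 * (2^m * u - 1))" unfolding X_def[symmetric] by linarith
  then show ?case using Suc by (simp add: pd_odd)
qed


lemma factor_pd:
  assumes "p \<le> q" "q < n"
  shows "factor_at (pd_prefix n) p q = map pd [p..<Suc q]"
proof -
  have "p + (Suc q - p) \<le> n" using assms by simp
  then have "take (Suc q - p) [p..<n] = [p..<p + (Suc q - p)]" by (rule take_upt)
  moreover have "p + (Suc q - p) = Suc q" using assms by simp
  ultimately show ?thesis
    by (simp add: factor_at_def pd_prefix_def drop_map take_map)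
qed

lemma between_mult:
  fixes A B M :: nat
  assumes "2^M dvd A" "2^M dvd B" "A < B"
  shows "\<exists>C. A \<le> C \<and> C \<le> B \<and> 2^Suc M dvd C"
proof -
  obtain a where a: "A = 2^M * a" using assms(1) by blast
  obtain b where b: "B = 2^M * b" using assms(2) by blast
  have ab: "a < b" using assms(3) a b by simp
  show ?thesis
  proof (cases "even a")
    case True
    then obtain c where "a = 2 * c" by blast
    then have "2^Suc M dvd A" using a by simp
    then show ?thesis using assms(3) by auto
  next
    case False
    then have ev: "even (a + 1)" by simp
    then obtain c where c: "a + 1 = 2 * c" by blast
    have "a + 1 \<le> b" using ab by simp
    then have "2^M * (a + 1) \<le> B" using b by (metis mult_le_mono2)
    moreover have "A \<le> 2^M * (a + 1)" using a by simp
    moreover have "2^Suc M dvd 2^M * (a + 1)" using c by simp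
    ultimately show ?thesis by blast
  qed
qed

lemma window_max:
  assumes "p \<le> q"
  shows "\<exists>M x0 u. p \<le> x0 \<and> x0 \<le> q \<and> Suc x0 = 2^M * u \<and> odd u \<and>
     (\<forall>j. p \<le> j \<and> j \<le> q \<and> j \<noteq> x0 \<longrightarrow> \<not> 2^M dvd Suc j)"
proof -
  define S where "S = {m. \<exists>j. p \<le> j \<and> j \<le> q \<and> 2^m dvd Suc j}"
  have sub: "S \<subseteq> {..Suc q}"
  proof
    fix m assume "m \<in> S"
    then obtain j where j: "p \<le> j" "j \<le> q" "2^m dvd Suc j" unfolding S_def by blast
    have "2^m \<le> Suc j" using j(3) by (rule dvd_imp_le) simp
    moreover have "m < 2^m" by (rule less_exp)
    ultimately have "m \<le> Suc q" using j(2) by linarith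
    then show "m \<in> {..Suc q}" by simp
  qed
  have fin: "finite S" using sub finite_subset by blast
  have "0 \<in> S" unfolding S_def using assms by auto
  then have ne: "S \<noteq> {}" by blast
  define M where "M = Max S"
  have "M \<in> S" unfolding M_def using fin ne by (rule Max_in)
  then obtain x0 where x0: "p \<le> x0" "x0 \<le> q" "2^M dvd Suc x0" unfolding S_def by blast
  have nS: "Suc M \<notin> S"
  proof
    assume "Suc M \<in> S"
    then have "Suc M \<le> M" unfolding M_def using Max_ge[OF fin] by blast
    then show False by simp
  qed
  obtain u where u: "Suc x0 = 2^M * u" using x0(3) by blast
  have odd: "odd u"
  proof
    assume "even u"
    then obtain c where "u = 2 * c" by blast
    then have "2^Suc M dvd Suc x0" using u by simp
    then have "Suc M \<in> S" unfolding S_def using x0 by blast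
    then show False using nS by simp
  qed
  have uniq: "\<forall>j. p \<le> j \<and> j \<le> q \<and> j \<noteq> x0 \<longrightarrow> \<not> 2^M dvd Suc j"
  proof (intro allI impI notI)
    fix j assume j: "p \<le> j \<and> j \<le> q \<and> j \<noteq> x0" and d: "2^M dvd Suc j"
    have "\<exists>C. min (Suc j) (Suc x0) \<le> C \<and> C \<le> max (Suc j) (Suc x0) \<and> 2^Suc M dvd C"
    proof (cases "j < x0")
      case True
      then show ?thesis using between_mult[OF d x0(3)] by simp
    next
      case False
      then have "x0 < j" using j by simp
      then show ?thesis using between_mult[OF x0(3) d] by simp
    qed
    then obtain C where C: "min (Suc j) (Suc x0) \<le> C" "C \<le> max (Suc j) (Suc x0)" "2^Suc M dvd C"
      by blast
    have "C = Suc (C - 1)" using C(1) by simp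
    moreover have "p \<le> C - 1" "C - 1 \<le> q" using C(1,2) j x0 by auto
    ultimately have "Suc M \<in> S" unfolding S_def using C(3) by (metis (mono_tags, lifting) mem_Collect_eq)
    then show False using nS by simp
  qed
  show ?thesis using x0(1,2) u odd uniq by blast
qed

lemma window_bounds:
  assumes "p \<le> x0" "x0 \<le> q" "2^M dvd Suc x0"
    "\<forall>j. p \<le> j \<and> j \<le> q \<and> j \<noteq> x0 \<longrightarrow> \<not> 2^M dvd Suc j"
  shows "x0 - p < 2^M" "q - x0 < 2^M"
proof -
  have pos: "(0::nat) < 2^M" by simp
  show "x0 - p < 2^M"
  proof (rule ccontr)
    assume "\<not> x0 - p < 2^M"
    then have h: "2^M \<le> x0 - p" by simp
    define j where "j = x0 - 2^M"
    have "p \<le> j" "j \<le> q" using h assms(1,2) pos by (auto simp: j_def)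
    moreover have "j < x0" using h pos assms(1) unfolding j_def by linarith
    then have "j \<noteq> x0" by simp
    moreover have "Suc j = Suc x0 - 2^M" using h assms(1) by (simp add: j_def)
    then have "2^M dvd Suc j" using assms(3) by (simp add: dvd_diff_nat)
    ultimately show False using assms(4) by blast
  qed
  show "q - x0 < 2^M"
  proof (rule ccontr)
    assume "\<not> q - x0 < 2^M"
    then have h: "2^M \<le> q - x0" by simp
    define j where "j = x0 + 2^M"
    have "p \<le> j" "j \<le> q" "j \<noteq> x0" using h assms(1,2) pos by (auto simp: j_def)
    moreover have sj: "Suc j = Suc x0 + 2^M" by (simp add: j_def)
    have "2^M dvd Suc j" unfolding sj by (rule dvd_add[OF assms(3) dvd_refl])
    ultimately show False using assms(4) by blast
  qed
qed

lemma transfer: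
  assumes "p \<le> x0" "x0 \<le> q" "2^M dvd Suc x0"
    "\<forall>j. p \<le> j \<and> j \<le> q \<and> j \<noteq> x0 \<longrightarrow> \<not> 2^M dvd Suc j"
    "2^M dvd Suc y" "pd y = pd x0" "x0 - p \<le> y"
  shows "map pd [y - (x0 - p)..<Suc (y + (q - x0))] = map pd [p..<Suc q]"
proof -
  define p' where "p' = y - (x0 - p)"
  have len: "Suc (y + (q - x0)) - p' = Suc q - p" using assms(1,2,7) by (simp add: p'_def)
  obtain a where a: "Suc x0 = 2^M * a" using assms(3) by blast
  obtain b where b: "Suc y = 2^M * b" using assms(5) by blast
  have key: "pd (p' + t) = pd (p + t)" if t: "t < Suc q - p" for t
  proof (cases "p + t = x0")
    case True
    then have "p' + t = y" using assms(7) by (simp add: p'_def)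
    then show ?thesis using True assms(6) by simp
  next
    case False
    then have nd: "\<not> 2^M dvd Suc (p + t)" using assms(4) t by simp
    show ?thesis
    proof (cases "x0 \<le> y")
      case True
      have "Suc y - Suc x0 = 2^M * (b - a)" using a b by (simp add: diff_mult_distrib2)
      then have e: "p' + t = (p + t) + 2^M * (b - a)" using True assms(1,7) by (simp add: p'_def)
      show ?thesis unfolding e by (rule pd_shift[OF nd])
    next
      case False
      have "Suc x0 - Suc y = 2^M * (a - b)" using a b by (simp add: diff_mult_distrib2)
      then have e: "p + t = (p' + t) + 2^M * (a - b)" using False assms(1,7) by (simp add: p'_def)
      have nd': "\<not> 2^M dvd Suc (p' + t)"
      proof
        assume "2^M dvd Suc (p' + t)"
        then have "2^M dvd Suc (p' + t) + 2^M * (a - b)" by (rule dvd_add[OF _ dvd_triv_left])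
        moreover have "Suc (p + t) = Suc (p' + t) + 2^M * (a - b)" using e by simp
        ultimately show False using nd by metis
      qed
      show ?thesis unfolding e by (rule pd_shift[OF nd', symmetric])
    qed
  qed
  show ?thesis
  proof (rule nth_equalityI)
    show "length (map pd [y - (x0 - p)..<Suc (y + (q - x0))]) = length (map pd [p..<Suc q])"
      by (simp only: length_map length_upt p'_def[symmetric] len)
    fix t assume "t < length (map pd [y - (x0 - p)..<Suc (y + (q - x0))])"
    then have t: "t < Suc q - p" by (simp only: length_map length_upt p'_def[symmetric] len)
    then have t2: "t < Suc (y + (q - x0)) - p'" using len by simp
    have "map pd [y - (x0 - p)..<Suc (y + (q - x0))] ! t = pd (p' + t)"
      unfolding p'_def[symmetric] using t2 by (simp del: upt_Suc)
    also have "\<dots> = pd (p + t)" using key[OF t] .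
    also have "\<dots> = map pd [p..<Suc q] ! t" using t by (simp del: upt_Suc)
    finally show "map pd [y - (x0 - p)..<Suc (y + (q - x0))] ! t = map pd [p..<Suc q] ! t" .
  qed
qed


definition covers :: "nat \<Rightarrow> nat \<Rightarrow> nat \<Rightarrow> nat \<Rightarrow> bool" where
  "covers n p q i \<longleftrightarrow> (\<exists>p' q'. p' \<le> q' \<and> q' < n \<and> map pd [p'..<Suc q'] = map pd [p..<Suc q]
      \<and> p' \<le> i \<and> i \<le> q')"

lemma covers_self: "p \<le> i \<Longrightarrow> i \<le> q \<Longrightarrow> q < n \<Longrightarrow> covers n p q i"
  unfolding covers_def using le_trans by blast

lemma covers_transfer:
  assumes "p \<le> x0" "x0 \<le> q" "2^M dvd Suc x0"
    "\<forall>j. p \<le> j \<and> j \<le> q \<and> j \<noteq> x0 \<longrightarrow> \<not> 2^M dvd Suc j"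
    "2^M dvd Suc y" "pd y = pd x0" "x0 - p \<le> y" "y + (q - x0) < n"
  shows "covers n p q y"
  unfolding covers_def
proof (intro exI conjI)
  show "map pd [y - (x0 - p)..<Suc (y + (q - x0))] = map pd [p..<Suc q]"
    by (rule transfer[OF assms(1-7)])
qed (use assms in auto)

lemma special_shift:
  fixes k' j :: nat
  assumes "3 * 2^k' \<le> j" "Suc j < 6 * 2^k'"
  shows "pd (j - 2^k') = pd j"
proof -
  obtain K :: nat where K: "2^k' = K" by blast
  have K1: "K \<ge> 1" using K by (metis one_le_numeral one_le_power)
  have a1: "3 * K \<le> j" "Suc j < 6 * K" using assms unfolding K by simp_all
  define i where "i = j - K"
  have ji: "j = i + K" using a1 K1 unfolding i_def by linarith
  have goal: "pd i = pd j"
  proof (cases "K dvd Suc i")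
    case False
    then have nd: "\<not> 2^k' dvd Suc i" unfolding K .
    have "pd (i + 2^k' * 1) = pd i" by (rule pd_shift[OF nd])
    then show ?thesis unfolding K ji by simp
  next
    case True
    obtain c where c: "Suc i = K * c" using True by blast
    have "K * 2 < K * c" using c a1 ji by linarith
    then have c2: "2 < c" by simp
    have "K * c < K * 5" using c a1 ji by linarith
    then have c5: "c < 5" by simp
    have c34: "c = 3 \<or> c = 4" using c2 c5 by linarith
    have p4: "pd (2^(k'+2) * 1 - 1) = (if even k' then 1 else 0)" by (subst pd_pow) simp_all
    have p3: "pd (2^k' * 3 - 1) = (if even k' then 1 else 0)" by (subst pd_pow) simp_all
    have p5: "pd (2^k' * 5 - 1) = (if even k' then 1 else 0)" by (subst pd_pow) simp_all
    have e4: "2^(k'+2) * 1 = K * 4" using K by simp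
    have e3: "2^k' * 3 = K * 3" using K by simp
    have e5: "2^k' * 5 = K * 5" using K by simp
    have i_eq: "i = K * c - 1" using c by linarith
    have j_eq: "j = K * c + K - 1" using c ji by linarith
    from c34 show ?thesis
    proof
      assume c3: "c = 3"
      have "i = K * 3 - 1" using i_eq c3 by simp
      moreover have "j = K * 4 - 1" using j_eq c3 by simp
      ultimately show ?thesis using p3 p4 e3 e4 by (simp add: ac_simps)
    next
      assume c4: "c = 4"
      have "i = K * 4 - 1" using i_eq c4 by simp
      moreover have "j = K * 5 - 1" using j_eq c4 by simp
      ultimately show ?thesis using p4 p5 e4 e5 by (simp add: ac_simps)
    qed
  qed
  show ?thesis using goal unfolding i_def K by simp
qed

lemma window_setup:
  assumes "p \<le> q"
  obtains M x0 u where "p \<le> x0" "x0 \<le> q" "Suc x0 = 2^M * u" "odd u" "2^M dvd Suc x0"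
    "\<forall>j. p \<le> j \<and> j \<le> q \<and> j \<noteq> x0 \<longrightarrow> \<not> 2^M dvd Suc j"
    "x0 - p < 2^M" "q - x0 < 2^M" "2^M \<le> Suc x0" "pd x0 = (if even M then 1 else 0)"
proof -
  obtain M x0 u where W: "p \<le> x0" "x0 \<le> q" "Suc x0 = 2^M * u" "odd u"
    and U: "\<forall>j. p \<le> j \<and> j \<le> q \<and> j \<noteq> x0 \<longrightarrow> \<not> 2^M dvd Suc j"
    using window_max[OF assms] by blast
  have dv: "2^M dvd Suc x0" using W(3) by simp
  have B: "x0 - p < 2^M" "q - x0 < 2^M" using window_bounds[OF W(1,2) dv U] by auto
  have u1: "u \<ge> 1" using W(4) by (cases u) auto
  have le: "2^M \<le> Suc x0" using W(3) u1 by simp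
  have "x0 = 2^M * u - 1" using W(3) by simp
  then have "pd x0 = (if even M then 1 else 0)" using pd_pow[OF W(4), of M] by simp
  then show ?thesis using that W dv U B le by blast
qed


lemma case1:
  assumes "p \<le> q" "q < n" "2^(k+1) \<le> n" "n < 2^(k+2)" "k \<ge> 1 \<longrightarrow> 3 * 2^k \<le> n"
  shows "covers n p q (2^k - 1) \<or> covers n p q (2^(k+1) - 1)"
proof -
  obtain M x0 u where W: "p \<le> x0" "x0 \<le> q" "Suc x0 = 2^M * u" "odd u" "2^M dvd Suc x0"
    and U: "\<forall>j. p \<le> j \<and> j \<le> q \<and> j \<noteq> x0 \<longrightarrow> \<not> 2^M dvd Suc j"
    and B: "x0 - p < 2^M" "q - x0 < 2^M" "2^M \<le> Suc x0" "pd x0 = (if even M then 1 else 0)"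
    by (rule window_setup[OF assms(1)])
  define K :: nat where "K = 2^k"
  have K1: "K \<ge> 1" by (simp add: K_def)
  have K2: "2^(k+1) = 2 * K" "2^(k+2) = 4 * K" by (simp_all add: K_def)
  have Mlt: "(2::nat)^M < 2^(k+2)" using B(3) W(2) assms(2,4) by linarith
  have Mle: "M < k + 2" by (rule power_less_imp_less_exp[of "2::nat"]) (simp, rule Mlt)
  consider "M = k + 1" | "M \<le> k" "even M = even k" | "M < k" "even M \<noteq> even k"
    using Mle by (cases "M = k + 1"; cases "M = k"; auto)
  then show ?thesis
  proof cases
    case 1
    have e: "Suc x0 = 2 * K * u" using W(3) 1 K2 by simp
    have "2 * K * u < 2 * K * 2" using e W(2) assms(2,4) K2 by linarith
    then have "u < 2" by simp
    then have "u = 1" using W(4) by presburger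
    then have "x0 = 2^(k+1) - 1" using W(3) 1 by simp
    then show ?thesis using covers_self[OF W(1) W(2) assms(2)] by simp
  next
    case 2
    have PK: "2^M \<le> K" unfolding K_def using 2(1) by (simp add: power_increasing)
    have "covers n p q (2^k - 1)"
    proof (rule covers_transfer[OF W(1,2,5) U])
      have "Suc (2^k - 1) = 2^k" by simp
      then show "2^M dvd Suc (2^k - 1)" using 2(1) by (simp add: le_imp_power_dvd)
      have "pd (2^k * 1 - 1) = (if even k then 1 else 0)" by (rule pd_pow) simp
      then show "pd (2^k - 1) = pd x0" using B(4) 2(2) by simp
      show "x0 - p \<le> 2^k - 1" using B(1) PK K_def by linarith
      show "2^k - 1 + (q - x0) < n" using B(2) PK K_def K2 assms(3) by linarith
    qed
    then show ?thesis by simp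
  next
    case 3
    then obtain k' where k': "k = Suc k'" by (cases k) auto
    have PK: "2^M \<le> (2::nat)^k'" using 3(1) k' by (simp add: power_increasing)
    have K': "K = 2 * 2^k'" by (simp add: K_def k')
    have n3: "3 * K \<le> n" using assms(5) k' K_def by simp
    have "covers n p q (2^(k+1) - 1)"
    proof (rule covers_transfer[OF W(1,2,5) U])
      have "Suc (2^(k+1) - 1) = 2^(k+1)" by simp
      then show "2^M dvd Suc (2^(k+1) - 1)" using 3(1) by (simp add: le_imp_power_dvd)
      have "pd (2^(k+1) * 1 - 1) = (if even (k+1) then 1 else 0)" by (rule pd_pow) simp
      then show "pd (2^(k+1) - 1) = pd x0" using B(4) 3(2) by simp
      show "x0 - p \<le> 2^(k+1) - 1" using B(1) PK K' K2 by linarith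
      show "2^(k+1) - 1 + (q - x0) < n" using B(2) PK K' K2 n3 by linarith
    qed
    then show ?thesis by simp
  qed
qed


lemma case2:
  fixes k' :: nat
  assumes "p \<le> q" "q < n" "4 * 2^k' \<le> n" "n < 6 * 2^k'"
  shows "covers n p q (2 * 2^k' - 1) \<or> covers n p q (3 * 2^k' - 1)"
proof -
  obtain M x0 u where W: "p \<le> x0" "x0 \<le> q" "Suc x0 = 2^M * u" "odd u" "2^M dvd Suc x0"
    and U: "\<forall>j. p \<le> j \<and> j \<le> q \<and> j \<noteq> x0 \<longrightarrow> \<not> 2^M dvd Suc j"
    and B: "x0 - p < 2^M" "q - x0 < 2^M" "2^M \<le> Suc x0" "pd x0 = (if even M then 1 else 0)"
    by (rule window_setup[OF assms(1)])
  obtain K :: nat where K: "2^k' = K" by blast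
  have K1: "K \<ge> 1" using K by (metis one_le_numeral one_le_power)
  have a: "4 * K \<le> n" "n < 6 * K" using assms(3,4) unfolding K by simp_all
  have K2: "2^(k'+1) = 2 * K" "2^(k'+2) = 4 * K" "2^(k'+3) = 8 * K"
    using K by (simp_all add: power_add)
  have Mlt: "(2::nat)^M < 2^(k'+3)" using B(3) W(2) assms(2) a K2 by linarith
  have Mle: "M < k' + 3" by (rule power_less_imp_less_exp[of "2::nat"]) (simp, rule Mlt)
  consider "M = k' + 2" | "M \<le> k' + 1" "even M = even (k' + 1)" | "M \<le> k'" "even M = even k'"
    using Mle by (cases "M = k' + 2"; cases "M = k' + 1"; auto)
  then show ?thesis
  proof cases
    case 1
    have e: "Suc x0 = 4 * K * u" using W(3) 1 K2 by simp
    have "4 * K * u < 4 * K * 2" using e W(2) assms(2) a by linarith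
    then have "u < 2" by simp
    then have "u = 1" using W(4) by presburger
    then have x0: "x0 = 4 * K - 1" using e by simp
    show ?thesis
    proof (cases "p \<le> 3 * K - 1")
      case True
      then have "covers n p q (3 * K - 1)"
        using covers_self[OF True _ assms(2)] x0 W(2) by simp
      then show ?thesis unfolding K by simp
    next
      case False
      have "covers n p q (3 * K - 1)"
        unfolding covers_def
      proof (intro exI conjI)
        show "p - K \<le> q - K" using assms(1) by simp
        show "q - K < n" using assms(2) by simp
        show "p - K \<le> 3 * K - 1" using W(1) x0 by simp
        show "3 * K - 1 \<le> q - K" using W(2) x0 K1 by simp
        show "map pd [p - K..<Suc (q - K)] = map pd [p..<Suc q]"
        proof (rule nth_equalityI)
          show "length (map pd [p - K..<Suc (q - K)]) = length (map pd [p..<Suc q])"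
            using False assms(1) K1 by simp
          fix t assume "t < length (map pd [p - K..<Suc (q - K)])"
          then have t: "t < Suc q - p" using False assms(1) K1 by (simp del: upt_Suc)
          have l: "map pd [p - K..<Suc (q - K)] ! t = pd (p - K + t)"
            using t False assms(1) K1 by (simp del: upt_Suc)
          have r: "map pd [p..<Suc q] ! t = pd (p + t)" using t by (simp del: upt_Suc)
          have "3 * 2^k' \<le> p + t" "Suc (p + t) < 6 * 2^k'"
            using False t assms(2) a unfolding K by linarith+
          then have "pd (p + t - 2^k') = pd (p + t)" by (rule special_shift)
          moreover have "p + t - 2^k' = p - K + t" using False K1 unfolding K by linarith
          ultimately show "map pd [p - K..<Suc (q - K)] ! t = map pd [p..<Suc q] ! t"
            using l r by simp
        qed
      qed
      then show ?thesis unfolding K by simp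
    qed
  next
    case 2
    have PK: "2^M \<le> (2::nat)^(k'+1)" using 2(1) by (intro power_increasing) simp_all
    have "covers n p q (2^(k'+1) * 1 - 1)"
    proof (rule covers_transfer[OF W(1,2,5) U])
      have "Suc (2^(k'+1) * 1 - 1) = 2^(k'+1)" by simp
      moreover have "2^M dvd (2::nat)^(k'+1)" using 2(1) by (rule le_imp_power_dvd)
      ultimately show "2^M dvd Suc (2^(k'+1) * 1 - 1)" by simp
      have "pd (2^(k'+1) * 1 - 1) = (if even (k'+1) then 1 else 0)" by (rule pd_pow) simp
      then show "pd (2^(k'+1) * 1 - 1) = pd x0" using B(4) 2(2) by simp
      show "x0 - p \<le> 2^(k'+1) * 1 - 1" using B(1) PK by linarith
      show "2^(k'+1) * 1 - 1 + (q - x0) < n" using B(2) PK K2 a by linarith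
    qed
    then show ?thesis using K2 K by simp
  next
    case 3
    have PK: "2^M \<le> (2::nat)^k'" using 3(1) by (intro power_increasing) simp_all
    have "covers n p q (2^k' * 3 - 1)"
    proof (rule covers_transfer[OF W(1,2,5) U])
      have "Suc (2^k' * 3 - 1) = 2^k' * 3" by simp
      moreover have "2^M dvd (2::nat)^k' * 3" using le_imp_power_dvd[OF 3(1), of 2] by (rule dvd_mult2)
      ultimately show "2^M dvd Suc (2^k' * 3 - 1)" by simp
      have "pd (2^k' * 3 - 1) = (if even k' then 1 else 0)" by (rule pd_pow) simp
      then show "pd (2^k' * 3 - 1) = pd x0" using B(4) 3(2) by simp
      show "x0 - p \<le> 2^k' * 3 - 1" using B(1) PK by linarith
      show "2^k' * 3 - 1 + (q - x0) < n" using B(2) PK K a by linarith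
    qed
    then show ?thesis using K by (simp add: ac_simps)
  qed
qed


lemma len_prefix: "length (pd_prefix n) = n"
  by (simp add: pd_prefix_def)

lemma attractor2:
  assumes "a < n" "b < n"
    "\<forall>p q. p \<le> q \<and> q < n \<longrightarrow> covers n p q a \<or> covers n p q b"
  shows "string_attractor (pd_prefix n) {a, b}"
  unfolding string_attractor_def len_prefix
proof (intro conjI allI impI)
  show "{a, b} \<subseteq> {0..<n}" using assms(1,2) by auto
  fix p q assume pq: "p \<le> q \<and> q < n"
  have "covers n p q a \<or> covers n p q b" using assms(3) pq by blast
  then obtain i p' q' where i: "i \<in> {a, b}" and c: "p' \<le> q'" "q' < n"
    "map pd [p'..<Suc q'] = map pd [p..<Suc q]" "p' \<le> i" "i \<le> q'"
    unfolding covers_def by blast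
  have "factor_at (pd_prefix n) p' q' = factor_at (pd_prefix n) p q"
    using c pq by (simp add: factor_pd del: upt_Suc)
  then show "\<exists>p' q' i. p' \<le> q' \<and> q' < n \<and> factor_at (pd_prefix n) p' q' = factor_at (pd_prefix n) p q
      \<and> i \<in> {a, b} \<and> p' \<le> i \<and> i \<le> q'"
    using c i by blast
qed

lemma occ_single:
  assumes "p' \<le> q'" "q' < n" "factor_at (pd_prefix n) p' q' = [c]" "p' \<le> i" "i \<le> q'"
  shows "pd i = c"
proof -
  have e: "map pd [p'..<Suc q'] = [c]" using assms(1-3) by (simp add: factor_pd del: upt_Suc)
  then have "length [p'..<Suc q'] = 1" by (metis length_map list.size(3) list.size(4) One_nat_def add_0)
  then have "q' = p'" using assms(1) by simp
  then have "i = p'" using assms(4,5) by simp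
  then show ?thesis using e \<open>q' = p'\<close> by simp
qed

lemma pd0: "pd 0 = 1" by (simp add: pd_even)
lemma pd1: "pd 1 = 0" using pd_odd[of 0] pd0 by simp

lemma lower:
  assumes n: "n \<ge> 2" and S: "string_attractor (pd_prefix n) S"
  shows "2 \<le> card S"
proof -
  have sub: "S \<subseteq> {0..<n}" and H: "\<forall>p q. p \<le> q \<and> q < n \<longrightarrow>
        (\<exists>p' q' i. p' \<le> q' \<and> q' < n \<and> factor_at (pd_prefix n) p' q' = factor_at (pd_prefix n) p q
                 \<and> i \<in> S \<and> p' \<le> i \<and> i \<le> q')"
    using S unfolding string_attractor_def len_prefix by blast+
  have f0: "factor_at (pd_prefix n) 0 0 = [1]" using n by (simp add: factor_pd pd0)
  have f1: "factor_at (pd_prefix n) 1 1 = [0]" using n pd1 by (simp add: factor_pd)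
  obtain p' q' i where A: "p' \<le> q'" "q' < n" "factor_at (pd_prefix n) p' q' = [1]" "i \<in> S" "p' \<le> i" "i \<le> q'"
    using H[rule_format, of 0 0] n f0 by auto
  obtain p'' q'' j where B: "p'' \<le> q''" "q'' < n" "factor_at (pd_prefix n) p'' q'' = [0]" "j \<in> S" "p'' \<le> j" "j \<le> q''"
    using H[rule_format, of 1 1] n f1 by auto
  have "pd i = 1" using occ_single[OF A(1,2,3,5,6)] .
  moreover have "pd j = 0" using occ_single[OF B(1,2,3,5,6)] .
  ultimately have "i \<noteq> j" by auto
  have fin: "finite S" using sub finite_subset by blast
  have "card {i, j} \<le> card S" using A(4) B(4) fin by (intro card_mono) auto
  then show ?thesis using \<open>i \<noteq> j\<close> by simp
qed

lemma upper:
  assumes n: "n \<ge> 2"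
  shows "\<exists>S. string_attractor (pd_prefix n) S \<and> card S = 2"
proof -
  obtain e where e: "2^e \<le> n" "n < 2^(e+1)" using ex_power_ivl1[of 2 n] n by auto
  have "e \<noteq> 0" using e n by (cases e) auto
  then obtain k where k: "e = Suc k" by (cases e) auto
  have kb: "2^(k+1) \<le> n" "n < 2^(k+2)" using e k by simp_all
  show ?thesis
  proof (cases "k \<ge> 1 \<and> n < 3 * 2^k")
    case True
    then obtain k' where k': "k = Suc k'" by (cases k) auto
    have a: "4 * 2^k' \<le> n" "n < 6 * 2^k'" using kb True k' by simp_all
    have "string_attractor (pd_prefix n) {2 * 2^k' - 1, 3 * 2^k' - 1}"
    proof (rule attractor2)
      show "2 * 2^k' - 1 < n" "3 * 2^k' - 1 < n" using a by simp_all
      show "\<forall>p q. p \<le> q \<and> q < n \<longrightarrow> covers n p q (2 * 2^k' - 1) \<or> covers n p q (3 * 2^k' - 1)"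
        using case2 a by blast
    qed
    moreover have "card {2 * 2^k' - 1, 3 * 2^k' - 1 :: nat} = 2"
    proof -
      have "(1::nat) \<le> 2^k'" by simp
      then have "(2::nat) * 2^k' - 1 < 3 * 2^k' - 1" by linarith
      then show ?thesis by simp
    qed
    ultimately show ?thesis by blast
  next
    case False
    have c5: "k \<ge> 1 \<longrightarrow> 3 * 2^k \<le> n" using False by auto
    have "string_attractor (pd_prefix n) {2^k - 1, 2^(k+1) - 1}"
    proof (rule attractor2)
      show "2^k - 1 < n" "2^(k+1) - 1 < n" using kb by simp_all
      show "\<forall>p q. p \<le> q \<and> q < n \<longrightarrow> covers n p q (2^k - 1) \<or> covers n p q (2^(k+1) - 1)"
        using case1 kb c5 by blast
    qed
    moreover have "card {2^k - 1, 2^(k+1) - 1 :: nat} = 2"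
    proof -
      have "(1::nat) \<le> 2^k" "(2::nat)^(k+1) = 2 * 2^k" by simp_all
      then have "(2::nat)^k - 1 < 2^(k+1) - 1" by linarith
      then show ?thesis by simp
    qed
    ultimately show ?thesis by blast
  qed
qed

theorem theorem3:
  fixes n :: nat
  assumes "n \<ge> 2"
  shows "min_attractor_size (pd_prefix n) = 2"
  unfolding min_attractor_size_def
proof (rule Least_equality)
  show "\<exists>S. string_attractor (pd_prefix n) S \<and> card S = 2" using upper[OF assms] .
  fix y assume "\<exists>S. string_attractor (pd_prefix n) S \<and> card S = y"
  then obtain S where "string_attractor (pd_prefix n) S" "card S = y" by blast
  then show "2 \<le> y" using lower[OF assms] by blast
qed

end
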